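(* Let $\mathcal{H}$ be a separable Hilbert space with a fixed orthonormal basis $\mathcal{B}=\{e_k\}_{k\in\mathbb{N}}$, let $\mathcal{S}$ be a closed subspace of $\mathcal{H}$, and for $n\in\mathbb{N}$ put $\mathcal{H}_n=\mathrm{span}\{e_1,\dots,e_n\}$ and $\mathcal{S}_n=\mathcal{S}\cap\mathcal{H}_n$. The following are equivalent: (1) $\mathcal{S}$ is $\mathcal{B}$-compatible; (2) (a) $\bigcup_{n\ge1}\mathcal{S}_n$ is dense in $\mathcal{S}$, and (b) there exists $M>0$ such that $K[\mathcal{S}_n,\mathcal{D}]=\sup_{Q\in\mathcal{P}(\mathcal{D})}\|P_{Q,\mathcal{S}_n}\|\le M$ for every $n\in\mathbb{N}$.
   Context: $\mathcal{D}$ is the algebra of operators diagonal with respect to $\mathcal{B}$; $\mathcal{P}(\mathcal{D})$ is the set of (orthogonal) projections in $\mathcal{D}$. For a positive bounded $D$ and a closed subspace $\mathcal{T}$, the pair $(D,\mathcal{T})$ is compatible if there is a bounded idempotent $Q$ with range $\mathcal{T}$ and $DQ=Q^*D$; writing $D=\begin{pmatrix} a & b\\ b^* & c\end{pmatrix}$ with respect to $\mathcal{T}\oplus\mathcal{T}^\perp$, this is equivalent to $R(b)\subseteq R(a)$, and then $P_{D,\mathcal{T}}:=\begin{pmatrix} 1 & d\\ 0&0\end{pmatrix}$ with $d$ the unique bounded operator $\mathcal{T}^\perp\to\mathcal{T}$ satisfying $ad=b$ and $R(d)\subseteq\overline{R(a)}$. Friedrichs angle cosine: $c[\mathcal{M},\mathcal{N}]=\sup\{|\langle\xi,\eta\rangle|:\xi\in\mathcal{M}\ominus(\mathcal{M}\cap\mathcal{N}),\eta\in\mathcal{N}\ominus(\mathcal{M}\cap\mathcal{N}),\|\xi\|=\|\eta\|=1\}$.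 A closed subspace $\mathcal{T}$ is $\mathcal{B}$-compatible if $c[\mathcal{T},\mathcal{D}]:=\sup_{Q\in\mathcal{P}(\mathcal{D})}c[\mathcal{T},R(Q)]<1$; then $K[\mathcal{T},\mathcal{D}]:=(1-c[\mathcal{T},\mathcal{D}]^2)^{-1/2}$. (Each $\mathcal{S}_n$ is $\mathcal{B}$-compatible, so the quantities in (b) are defined.) *)

theory Defs
  imports Complex_Main
begin

text \<open>Model: the separable Hilbert space H with fixed orthonormal basis B = {e_k}
  is (unitarily, basis-to-basis) identified with the complex space l2(N) with its
  standard basis; e_k is the k-th unit sequence (indices start at 0, so e_1,...,e_n
  of the paper are indices 0,...,n-1).\<close>

definition l2 :: "(nat \<Rightarrow> complex) set" where
  "l2 = {x. summable (\<lambda>k. (cmod (x k))\<^sup>2)}"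

definition l2inner :: "(nat \<Rightarrow> complex) \<Rightarrow> (nat \<Rightarrow> complex) \<Rightarrow> complex" where
  "l2inner x y = (\<Sum>k. x k * cnj (y k))"

definition l2norm :: "(nat \<Rightarrow> complex) \<Rightarrow> real" where
  "l2norm x = sqrt (\<Sum>k. (cmod (x k))\<^sup>2)"

definition closed_subspace :: "(nat \<Rightarrow> complex) set \<Rightarrow> bool" where
  "closed_subspace S \<longleftrightarrow> S \<subseteq> l2 \<and> (\<lambda>k. 0) \<in> S
     \<and> (\<forall>x\<in>S. \<forall>y\<in>S. (\<lambda>k. x k + y k) \<in> S)
     \<and> (\<forall>x\<in>S. \<forall>c::complex. (\<lambda>k. c * x k) \<in> S)
     \<and> (\<forall>(x::nat \<Rightarrow> nat \<Rightarrow> complex) z. (\<forall>n. x n \<in> S) \<and> z \<in> l2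
           \<and> (\<lambda>n. l2norm (\<lambda>k. x n k - z k)) \<longlonglongrightarrow> 0 \<longrightarrow> z \<in> S)"

definition Hn :: "nat \<Rightarrow> (nat \<Rightarrow> complex) set" where
  "Hn n = {x \<in> l2. \<forall>k\<ge>n. x k = 0}"

definition ominus :: "(nat \<Rightarrow> complex) set \<Rightarrow> (nat \<Rightarrow> complex) set \<Rightarrow> (nat \<Rightarrow> complex) set" where
  "ominus M N = {\<xi> \<in> M. \<forall>\<eta>\<in>N. l2inner \<xi> \<eta> = 0}"

text \<open>Cosine of the Friedrichs angle; the supremum of an empty set is taken to be 0.\<close>
definition friedrichs_cos :: "(nat \<Rightarrow> complex) set \<Rightarrow> (nat \<Rightarrow> complex) set \<Rightarrow> real" where
  "friedrichs_cos M N = Sup (insert 0 {cmod (l2inner \<xi> \<eta>) | \<xi> \<eta>.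
      \<xi> \<in> ominus M (M \<inter> N) \<and> \<eta> \<in> ominus N (M \<inter> N) \<and> l2norm \<xi> = 1 \<and> l2norm \<eta> = 1})"

text \<open>Ranges of the orthogonal projections in the diagonal algebra D: a projection
  diagonal w.r.t. B is multiplication by the indicator of some J \<subseteq> N.\<close>
definition diag_range :: "nat set \<Rightarrow> (nat \<Rightarrow> complex) set" where
  "diag_range J = {x \<in> l2. \<forall>k. k \<notin> J \<longrightarrow> x k = 0}"

definition cos_D :: "(nat \<Rightarrow> complex) set \<Rightarrow> real" where
  "cos_D T = (SUP J. friedrichs_cos T (diag_range J))"

definition B_compatible :: "(nat \<Rightarrow> complex) set \<Rightarrow> bool" where
  "B_compatible T \<longleftrightarrow> cos_D T < 1"

definition K_D :: "(nat \<Rightarrow> complex) set \<Rightarrow> real" where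
  "K_D T = 1 / sqrt (1 - (cos_D T)\<^sup>2)"

end

theory Submission imports Defs "HOL-Analysis.Analysis" begin

definition pr :: "nat set \<Rightarrow> (nat \<Rightarrow> complex) \<Rightarrow> (nat \<Rightarrow> complex)" where
  "pr J x = (\<lambda>k. if k \<in> J then x k else 0)"

lemma sq_add_le: "(cmod (a + b))\<^sup>2 \<le> 2 * (cmod a)\<^sup>2 + 2 * (cmod b)\<^sup>2"
proof -
  have "cmod (a + b) \<le> cmod a + cmod b" by (rule norm_triangle_ineq)
  hence "(cmod (a + b))\<^sup>2 \<le> (cmod a + cmod b)\<^sup>2"
    by (simp add: power_mono)
  also have "\<dots> \<le> 2 * (cmod a)\<^sup>2 + 2 * (cmod b)\<^sup>2"
  proof -
    have "0 \<le> (cmod a - cmod b)\<^sup>2" by simp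
    thus ?thesis by (simp add: power2_eq_square algebra_simps)
  qed
  finally show ?thesis .
qed

lemma l2_add: "x \<in> l2 \<Longrightarrow> y \<in> l2 \<Longrightarrow> (\<lambda>k. x k + y k) \<in> l2"
  unfolding l2_def
  by (auto intro!: summable_comparison_test'[where N=0 and g="\<lambda>k. 2 * (cmod (x k))\<^sup>2 + 2 * (cmod (y k))\<^sup>2"]
     summable_add summable_mult sq_add_le)

lemma l2_scale: "x \<in> l2 \<Longrightarrow> (\<lambda>k. c * x k) \<in> l2"
  unfolding l2_def by (simp add: norm_mult power_mult_distrib summable_mult)

lemma l2_diff: "x \<in> l2 \<Longrightarrow> y \<in> l2 \<Longrightarrow> (\<lambda>k. x k - y k) \<in> l2"
proof -
  assume "x \<in> l2" "y \<in> l2"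
  hence "(\<lambda>k. x k + (-1) * y k) \<in> l2" by (intro l2_add l2_scale)
  thus ?thesis by simp
qed

lemma l2_pr: "x \<in> l2 \<Longrightarrow> pr J x \<in> l2"
  unfolding l2_def pr_def
  by (auto intro!: summable_comparison_test'[where N=0 and g="\<lambda>k. (cmod (x k))\<^sup>2"])

lemma l2_fin: "(\<forall>k\<ge>n. x k = 0) \<Longrightarrow> x \<in> l2"
  unfolding l2_def mem_Collect_eq by (rule summable_finite[where N="{..<n}"]) auto

lemma l2_zero: "(\<lambda>k. 0) \<in> l2" by (rule l2_fin[of 0]) simp

lemma prod_le: "cmod (a * cnj b) \<le> ((cmod a)\<^sup>2 + (cmod b)\<^sup>2) / 2"
proof -
  have "0 \<le> (cmod a - cmod b)\<^sup>2" by simp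
  thus ?thesis by (simp add: norm_mult complex_mod_cnj power2_eq_square algebra_simps)
qed

lemma summable_inner_norm: "x \<in> l2 \<Longrightarrow> y \<in> l2 \<Longrightarrow> summable (\<lambda>k. cmod (x k * cnj (y k)))"
proof -
  assume a: "x \<in> l2" "y \<in> l2"
  show ?thesis
  proof (rule summable_comparison_test'[where N=0 and g="\<lambda>k. ((cmod (x k))\<^sup>2 + (cmod (y k))\<^sup>2)/2"])
    show "summable (\<lambda>k. ((cmod (x k))\<^sup>2 + (cmod (y k))\<^sup>2)/2)"
      using a unfolding l2_def by (auto intro!: summable_add summable_divide)
    fix n show "norm (cmod (x n * cnj (y n))) \<le> ((cmod (x n))\<^sup>2 + (cmod (y n))\<^sup>2)/2"
      using prod_le by simp
  qed
qed

lemma summable_inner: "x \<in> l2 \<Longrightarrow> y \<in> l2 \<Longrightarrow> summable (\<lambda>k. x k * cnj (y k))"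
  by (rule summable_norm_cancel, rule summable_inner_norm)

lemma inner_add_left: "x \<in> l2 \<Longrightarrow> y \<in> l2 \<Longrightarrow> z \<in> l2 \<Longrightarrow>
  l2inner (\<lambda>k. x k + y k) z = l2inner x z + l2inner y z"
  unfolding l2inner_def by (simp add: distrib_right suminf_add summable_inner)

lemma inner_diff_left: "x \<in> l2 \<Longrightarrow> y \<in> l2 \<Longrightarrow> z \<in> l2 \<Longrightarrow>
  l2inner (\<lambda>k. x k - y k) z = l2inner x z - l2inner y z"
  unfolding l2inner_def by (simp add: left_diff_distrib suminf_diff summable_inner)

lemma inner_scale_left: "x \<in> l2 \<Longrightarrow> z \<in> l2 \<Longrightarrow>
  l2inner (\<lambda>k. c * x k) z = c * l2inner x z"
  unfolding l2inner_def by (simp add: mult.assoc suminf_mult summable_inner)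

lemma inner_cnj: "x \<in> l2 \<Longrightarrow> y \<in> l2 \<Longrightarrow> l2inner y x = cnj (l2inner x y)"
proof -
  assume a: "x \<in> l2" "y \<in> l2"
  have "(\<lambda>k. x k * cnj (y k)) sums l2inner x y"
    unfolding l2inner_def using summable_inner[OF a] by (simp add: summable_sums)
  hence "(\<lambda>k. cnj (x k * cnj (y k))) sums cnj (l2inner x y)" by (simp only: sums_cnj)
  hence "(\<lambda>k. y k * cnj (x k)) sums cnj (l2inner x y)" by (simp add: mult.commute)
  thus ?thesis unfolding l2inner_def by (simp add: sums_iff)
qed

lemma inner_add_right: "x \<in> l2 \<Longrightarrow> y \<in> l2 \<Longrightarrow> z \<in> l2 \<Longrightarrow>
  l2inner z (\<lambda>k. x k + y k) = l2inner z x + l2inner z y"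
  by (simp add: inner_cnj[of _ z] l2_add inner_add_left)

lemma inner_diff_right: "x \<in> l2 \<Longrightarrow> y \<in> l2 \<Longrightarrow> z \<in> l2 \<Longrightarrow>
  l2inner z (\<lambda>k. x k - y k) = l2inner z x - l2inner z y"
  by (simp add: inner_cnj[of _ z] l2_diff inner_diff_left)

lemma inner_scale_right: "x \<in> l2 \<Longrightarrow> z \<in> l2 \<Longrightarrow>
  l2inner z (\<lambda>k. c * x k) = cnj c * l2inner z x"
  by (simp add: inner_cnj[of _ z] l2_scale inner_scale_left)

lemma nsq: "x \<in> l2 \<Longrightarrow> (l2norm x)\<^sup>2 = (\<Sum>k. (cmod (x k))\<^sup>2)"
  proof -
  assume "x \<in> l2"
  hence "summable (\<lambda>k. (cmod (x k))\<^sup>2)" by (simp add: l2_def)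
  hence "0 \<le> (\<Sum>k. (cmod (x k))\<^sup>2)" by (rule suminf_nonneg) simp
  thus ?thesis unfolding l2norm_def by simp
qed

lemma l2norm_nonneg: "x \<in> l2 \<Longrightarrow> 0 \<le> l2norm x"
  by (metis nsq real_sqrt_ge_zero zero_le_power2 l2norm_def)

lemma inner_self: "x \<in> l2 \<Longrightarrow> l2inner x x = of_real ((l2norm x)\<^sup>2)"
proof -
  assume a: "x \<in> l2"
  have "l2inner x x = (\<Sum>k. of_real ((cmod (x k))\<^sup>2))"
    unfolding l2inner_def by (simp add: complex_mult_cnj cmod_def)
  also have "\<dots> = of_real (\<Sum>k. (cmod (x k))\<^sup>2)"
    using a unfolding l2_def by (simp add: suminf_of_real)
  finally show ?thesis using nsq[OF a] by simp
qed

lemma l2norm_zero_iff: "x \<in> l2 \<Longrightarrow> l2norm x = 0 \<longleftrightarrow> (\<forall>k. x k = 0)"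
proof -
  assume a: "x \<in> l2"
  have "l2norm x = 0 \<longleftrightarrow> (\<Sum>k. (cmod (x k))\<^sup>2) = 0"
    using nsq[OF a] l2norm_nonneg[OF a] by (simp add: l2norm_def)
  also have "\<dots> \<longleftrightarrow> (\<forall>k. (cmod (x k))\<^sup>2 = 0)"
    using a unfolding l2_def by (subst suminf_eq_zero_iff) auto
  finally show ?thesis by simp
qed

lemma inner_zero_left: "l2inner (\<lambda>k. 0) y = 0" unfolding l2inner_def by simp
lemma inner_zero_right: "l2inner y (\<lambda>k. 0) = 0" unfolding l2inner_def by simp

lemma coord_le: "x \<in> l2 \<Longrightarrow> cmod (x i) \<le> l2norm x"
proof -
  assume a: "x \<in> l2"
  have "(cmod (x i))\<^sup>2 = sum (\<lambda>k. (cmod (x k))\<^sup>2) {i}" by simp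
  also have "\<dots> \<le> (\<Sum>k. (cmod (x k))\<^sup>2)"
    using a unfolding l2_def by (intro sum_le_suminf) auto
  also have "\<dots> = (l2norm x)\<^sup>2" using nsq[OF a] by simp
  finally show ?thesis using l2norm_nonneg[OF a] by (rule power2_le_imp_le)
qed


lemma norm_add_sq: "x \<in> l2 \<Longrightarrow> y \<in> l2 \<Longrightarrow>
  (l2norm (\<lambda>k. x k + y k))\<^sup>2 = (l2norm x)\<^sup>2 + 2 * Re (l2inner x y) + (l2norm y)\<^sup>2"
proof -
  assume a: "x \<in> l2" "y \<in> l2"
  have s: "(\<lambda>k. x k + y k) \<in> l2" using a by (rule l2_add)
  have "of_real ((l2norm (\<lambda>k. x k + y k))\<^sup>2) = l2inner (\<lambda>k. x k + y k) (\<lambda>k. x k + y k)"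
    using inner_self[OF s] by simp
  also have "\<dots> = l2inner x x + l2inner x y + (l2inner y x + l2inner y y)"
    using a s by (simp add: inner_add_left inner_add_right)
  also have "\<dots> = of_real ((l2norm x)\<^sup>2) + l2inner x y + cnj (l2inner x y) + of_real ((l2norm y)\<^sup>2)"
    using a by (simp add: inner_self inner_cnj[of x y])
  finally have "Re (of_real ((l2norm (\<lambda>k. x k + y k))\<^sup>2)) = Re (of_real ((l2norm x)\<^sup>2) + l2inner x y + cnj (l2inner x y) + of_real ((l2norm y)\<^sup>2))"
    by simp
  thus ?thesis by simp
qed

lemma norm_diff_sq: "x \<in> l2 \<Longrightarrow> y \<in> l2 \<Longrightarrow>
  (l2norm (\<lambda>k. x k - y k))\<^sup>2 = (l2norm x)\<^sup>2 - 2 * Re (l2inner x y) + (l2norm y)\<^sup>2"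
proof -
  assume a: "x \<in> l2" "y \<in> l2"
  have b: "(\<lambda>k. (-1) * y k) \<in> l2" using a by (intro l2_scale)
  have "(l2norm (\<lambda>k. x k + (-1) * y k))\<^sup>2 = (l2norm x)\<^sup>2 + 2 * Re (l2inner x (\<lambda>k. (-1) * y k)) + (l2norm (\<lambda>k. (-1) * y k))\<^sup>2"
    by (rule norm_add_sq[OF a(1) b])
  moreover have "l2inner x (\<lambda>k. (-1) * y k) = - l2inner x y" using inner_scale_right[OF a(2) a(1), of "-1"] by simp
  moreover have "l2norm (\<lambda>k. (-1) * y k) = l2norm y" unfolding l2norm_def by simp
  ultimately show ?thesis by simp
qed

lemma norm_scale: "x \<in> l2 \<Longrightarrow> l2norm (\<lambda>k. c * x k) = cmod c * l2norm x"
proof -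
  assume a: "x \<in> l2"
  have "(\<Sum>k. (cmod (c * x k))\<^sup>2) = (\<Sum>k. (cmod c)\<^sup>2 * (cmod (x k))\<^sup>2)"
    by (simp add: norm_mult power_mult_distrib)
  also have "\<dots> = (cmod c)\<^sup>2 * (\<Sum>k. (cmod (x k))\<^sup>2)"
    using a unfolding l2_def by (simp add: suminf_mult)
  finally show ?thesis unfolding l2norm_def by (simp add: real_sqrt_mult)
qed

lemma amgm_inner: "x \<in> l2 \<Longrightarrow> y \<in> l2 \<Longrightarrow> t > 0 \<Longrightarrow>
  cmod (l2inner x y) \<le> (t * (l2norm x)\<^sup>2 + (l2norm y)\<^sup>2 / t) / 2"
proof -
  assume a: "x \<in> l2" "y \<in> l2" and t: "t > 0"
  have sx: "summable (\<lambda>k. (cmod (x k))\<^sup>2)" and sy: "summable (\<lambda>k. (cmod (y k))\<^sup>2)"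
    using a by (auto simp: l2_def)
  have pt: "cmod (x k * cnj (y k)) \<le> (t * (cmod (x k))\<^sup>2 + (cmod (y k))\<^sup>2 / t) / 2" for k
  proof -
    have "0 \<le> (t * cmod (x k) - cmod (y k))\<^sup>2 / t" using t by simp
    also have "(t * cmod (x k) - cmod (y k))\<^sup>2 / t = t * (cmod (x k))\<^sup>2 + (cmod (y k))\<^sup>2 / t - 2 * (cmod (x k) * cmod (y k))"
      using t by (simp add: power2_eq_square field_simps)
    finally show ?thesis by (simp add: norm_mult complex_mod_cnj)
  qed
  have "cmod (l2inner x y) \<le> (\<Sum>k. cmod (x k * cnj (y k)))"
    unfolding l2inner_def by (rule summable_norm, rule summable_inner_norm[OF a])
  also have "\<dots> \<le> (\<Sum>k. (t * (cmod (x k))\<^sup>2 + (cmod (y k))\<^sup>2 / t) / 2)"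
    by (rule suminf_le[OF pt summable_inner_norm[OF a]])
       (intro summable_divide summable_add summable_mult sx sy)
  also have "\<dots> = (\<Sum>k. (t * (cmod (x k))\<^sup>2 + (cmod (y k))\<^sup>2 / t)) / 2"
    by (rule suminf_divide) (intro summable_add summable_mult summable_divide sx sy)
  also have "(\<Sum>k. (t * (cmod (x k))\<^sup>2 + (cmod (y k))\<^sup>2 / t)) = (\<Sum>k. t * (cmod (x k))\<^sup>2) + (\<Sum>k. (cmod (y k))\<^sup>2 / t)"
    by (rule suminf_add[symmetric]) (intro summable_mult summable_divide sx sy)+
  also have "(\<Sum>k. t * (cmod (x k))\<^sup>2) = t * (\<Sum>k. (cmod (x k))\<^sup>2)"
    by (rule suminf_mult[OF sx])
  also have "(\<Sum>k. (cmod (y k))\<^sup>2 / t) = (\<Sum>k. (cmod (y k))\<^sup>2) / t"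
    by (rule suminf_divide[OF sy])
  finally show ?thesis using nsq[OF a(1)] nsq[OF a(2)] by simp
qed

lemma cauchy_schwarz: "x \<in> l2 \<Longrightarrow> y \<in> l2 \<Longrightarrow> cmod (l2inner x y) \<le> l2norm x * l2norm y"
proof -
  assume a: "x \<in> l2" "y \<in> l2"
  show ?thesis
  proof (cases "l2norm x = 0 \<or> l2norm y = 0")
    case True
    hence "(\<forall>k. x k = 0) \<or> (\<forall>k. y k = 0)" using l2norm_zero_iff[OF a(1)] l2norm_zero_iff[OF a(2)] by simp
    hence "x = (\<lambda>k. 0) \<or> y = (\<lambda>k. 0)" by auto
    thus ?thesis using l2norm_nonneg[OF a(1)] l2norm_nonneg[OF a(2)] by (auto simp: inner_zero_left inner_zero_right)
  next
    case False
    hence p: "l2norm x > 0" "l2norm y > 0" using l2norm_nonneg[OF a(1)] l2norm_nonneg[OF a(2)] by (auto simp: less_le)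
    have "cmod (l2inner x y) \<le> ((l2norm y / l2norm x) * (l2norm x)\<^sup>2 + (l2norm y)\<^sup>2 / (l2norm y / l2norm x)) / 2"
      using p by (intro amgm_inner a) simp
    also have "\<dots> = l2norm x * l2norm y" using p by (simp add: power2_eq_square field_simps)
    finally show ?thesis .
  qed
qed

lemma norm_triangle: "x \<in> l2 \<Longrightarrow> y \<in> l2 \<Longrightarrow> l2norm (\<lambda>k. x k + y k) \<le> l2norm x + l2norm y"
proof -
  assume a: "x \<in> l2" "y \<in> l2"
  have "Re (l2inner x y) \<le> l2norm x * l2norm y"
    by (rule order_trans[OF complex_Re_le_cmod cauchy_schwarz[OF a]])
  hence "(l2norm (\<lambda>k. x k + y k))\<^sup>2 \<le> (l2norm x + l2norm y)\<^sup>2"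
    unfolding norm_add_sq[OF a] power2_sum by linarith
  moreover have "0 \<le> l2norm x + l2norm y" using l2norm_nonneg[OF a(1)] l2norm_nonneg[OF a(2)] by simp
  ultimately show ?thesis by (rule power2_le_imp_le)
qed

lemma norm_triangle3: "x \<in> l2 \<Longrightarrow> y \<in> l2 \<Longrightarrow> z \<in> l2 \<Longrightarrow>
  l2norm (\<lambda>k. x k - z k) \<le> l2norm (\<lambda>k. x k - y k) + l2norm (\<lambda>k. y k - z k)"
proof -
  assume a: "x \<in> l2" "y \<in> l2" "z \<in> l2"
  have "l2norm (\<lambda>k. (x k - y k) + (y k - z k)) \<le> l2norm (\<lambda>k. x k - y k) + l2norm (\<lambda>k. y k - z k)"
    using a by (intro norm_triangle l2_diff)
  thus ?thesis by simp
qed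

lemma norm_sym: "l2norm (\<lambda>k. x k - y k) = l2norm (\<lambda>k. y k - x k)"
  unfolding l2norm_def by (simp add: norm_minus_commute)

lemma norm_diff_ge: "x \<in> l2 \<Longrightarrow> y \<in> l2 \<Longrightarrow> l2norm x \<le> l2norm y + l2norm (\<lambda>k. x k - y k)"
proof -
  assume a: "x \<in> l2" "y \<in> l2"
  have "l2norm (\<lambda>k. y k + (x k - y k)) \<le> l2norm y + l2norm (\<lambda>k. x k - y k)"
    using a by (intro norm_triangle l2_diff)
  thus ?thesis by simp
qed

lemma pr_split: "x \<in> l2 \<Longrightarrow> (l2norm x)\<^sup>2 = (l2norm (pr J x))\<^sup>2 + (l2norm (pr (-J) x))\<^sup>2"
proof -
  assume a: "x \<in> l2"
  have "(\<Sum>k. (cmod (x k))\<^sup>2) = (\<Sum>k. (cmod (pr J x k))\<^sup>2 + (cmod (pr (-J) x k))\<^sup>2)"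
    unfolding pr_def by (rule arg_cong[where f=suminf]) auto
  also have "\<dots> = (\<Sum>k. (cmod (pr J x k))\<^sup>2) + (\<Sum>k. (cmod (pr (-J) x k))\<^sup>2)"
    using l2_pr[OF a, of J] l2_pr[OF a, of "-J"] by (intro suminf_add[symmetric]) (auto simp: l2_def)
  finally show ?thesis using nsq[OF a] nsq[OF l2_pr[OF a, of J]] nsq[OF l2_pr[OF a, of "-J"]] by simp
qed

lemma pr_le: "x \<in> l2 \<Longrightarrow> l2norm (pr J x) \<le> l2norm x"
proof -
  assume a: "x \<in> l2"
  have "(l2norm (pr J x))\<^sup>2 \<le> (l2norm x)\<^sup>2" using pr_split[OF a, of J] by simp
  thus ?thesis using l2norm_nonneg[OF a] by (rule power2_le_imp_le)
qed

lemma pr_diff: "pr J (\<lambda>k. x k - y k) = (\<lambda>k. pr J x k - pr J y k)"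
  unfolding pr_def by auto

lemma inner_pr: "l2inner (pr J x) y = l2inner x (pr J y)"
  unfolding l2inner_def pr_def by (rule arg_cong[where f=suminf]) auto

lemma pr_id: "y \<in> diag_range J \<Longrightarrow> pr J y = y"
  unfolding pr_def diag_range_def by auto

lemma pr_in: "x \<in> l2 \<Longrightarrow> pr J x \<in> diag_range J"
  unfolding diag_range_def using l2_pr by (auto simp: pr_def)

lemma Hn_diag: "Hn n = diag_range {..<n}"
  unfolding Hn_def diag_range_def by auto

lemma nsq_fin: "\<forall>k\<ge>n. x k = 0 \<Longrightarrow> (l2norm x)\<^sup>2 = (\<Sum>k<n. (cmod (x k))\<^sup>2)"
  using nsq[OF l2_fin] by (subst suminf_finite[symmetric]) auto


definition fset :: "(nat \<Rightarrow> complex) set \<Rightarrow> nat set \<Rightarrow> real set" where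
  "fset T J = {cmod (l2inner \<xi> \<eta>) | \<xi> \<eta>.
      \<xi> \<in> ominus T (T \<inter> diag_range J) \<and> \<eta> \<in> ominus (diag_range J) (T \<inter> diag_range J) \<and> l2norm \<xi> = 1 \<and> l2norm \<eta> = 1}"

lemma fc_eq: "friedrichs_cos T (diag_range J) = Sup (insert 0 (fset T J))"
  unfolding friedrichs_cos_def fset_def by simp

lemma diag_l2: "diag_range J \<subseteq> l2" unfolding diag_range_def by auto

lemma fset_le: assumes T: "T \<subseteq> l2" and r: "r \<in> fset T J"
  shows "\<exists>\<xi>\<in>ominus T (T \<inter> diag_range J). l2norm \<xi> = 1 \<and> r \<le> l2norm (pr J \<xi>)"
proof -
  obtain \<xi> \<eta> where r: "r = cmod (l2inner \<xi> \<eta>)" and x: "\<xi> \<in> ominus T (T \<inter> diag_range J)"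
    and e: "\<eta> \<in> ominus (diag_range J) (T \<inter> diag_range J)" and n: "l2norm \<xi> = 1" "l2norm \<eta> = 1"
    using r unfolding fset_def by blast
  have xl: "\<xi> \<in> l2" using x T unfolding ominus_def by auto
  have ed: "\<eta> \<in> diag_range J" using e unfolding ominus_def by auto
  hence el: "\<eta> \<in> l2" using diag_l2 by auto
  have "l2inner \<xi> \<eta> = l2inner \<xi> (pr J \<eta>)" using pr_id[OF ed] by simp
  also have "\<dots> = l2inner (pr J \<xi>) \<eta>" by (simp add: inner_pr)
  finally have "r \<le> l2norm (pr J \<xi>) * l2norm \<eta>" using r cauchy_schwarz[OF l2_pr[OF xl] el] by simp
  thus ?thesis using n x by auto
qed

lemma fset_bdd: assumes T: "T \<subseteq> l2" shows "bdd_above (insert 0 (fset T J))"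
proof (rule bdd_aboveI[where M=1])
  fix r assume "r \<in> insert 0 (fset T J)"
  then consider "r = 0" | "r \<in> fset T J" by auto
  thus "r \<le> 1"
  proof cases
    case 2
    then obtain \<xi> where x: "\<xi>\<in>ominus T (T \<inter> diag_range J)" "l2norm \<xi> = 1" "r \<le> l2norm (pr J \<xi>)"
      using fset_le[OF T] by blast
    have "\<xi> \<in> l2" using x T unfolding ominus_def by auto
    thus ?thesis using pr_le[of \<xi> J] x by simp
  qed simp
qed

lemma fset_mem: assumes T: "T \<subseteq> l2" and x: "\<xi> \<in> ominus T (T \<inter> diag_range J)" and n: "l2norm \<xi> = 1"
  and p: "l2norm (pr J \<xi>) \<noteq> 0"
  shows "l2norm (pr J \<xi>) \<in> fset T J"
proof -
  define r where "r = l2norm (pr J \<xi>)"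
  have xl: "\<xi> \<in> l2" using x T unfolding ominus_def by auto
  have pl: "pr J \<xi> \<in> l2" using l2_pr[OF xl] .
  have rp: "r > 0" using p l2norm_nonneg[OF pl] unfolding r_def by simp
  define \<eta> where "\<eta> = (\<lambda>k. complex_of_real (1/r) * pr J \<xi> k)"
  have el: "\<eta> \<in> l2" unfolding \<eta>_def using pl by (rule l2_scale)
  have ed: "\<eta> \<in> diag_range J" using el unfolding \<eta>_def diag_range_def pr_def by auto
  have orth: "l2inner \<eta> w = 0" if w: "w \<in> T \<inter> diag_range J" for w
  proof -
    have wl: "w \<in> l2" using w T by auto
    have "l2inner \<eta> w = of_real (1/r) * l2inner (pr J \<xi>) w"
      unfolding \<eta>_def by (rule inner_scale_left[OF pl wl])
    also have "l2inner (pr J \<xi>) w = l2inner \<xi> (pr J w)" by (rule inner_pr)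
    also have "\<dots> = l2inner \<xi> w" using pr_id[of w J] w by simp
    also have "\<dots> = 0" using x w unfolding ominus_def by auto
    finally show ?thesis by simp
  qed
  have "l2norm \<eta> = cmod (complex_of_real (1/r)) * l2norm (pr J \<xi>)"
    unfolding \<eta>_def by (rule norm_scale[OF pl])
  hence en: "l2norm \<eta> = 1" using rp unfolding r_def by (simp add: norm_divide)
  have pp: "pr J (pr J \<xi>) = pr J \<xi>" unfolding pr_def by auto
  have "l2inner \<xi> \<eta> = cnj (of_real (1/r)) * l2inner \<xi> (pr J \<xi>)"
    unfolding \<eta>_def by (rule inner_scale_right[OF pl xl])
  also have "l2inner \<xi> (pr J \<xi>) = l2inner (pr J \<xi>) (pr J \<xi>)" using inner_pr[of J \<xi> "pr J \<xi>"] pp by simp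
  also have "\<dots> = of_real (r\<^sup>2)" using inner_self[OF pl] unfolding r_def by simp
  finally have "l2inner \<xi> \<eta> = of_real r" using rp by (simp add: power2_eq_square)
  hence "r = cmod (l2inner \<xi> \<eta>)" using rp by simp
  moreover have "\<eta> \<in> ominus (diag_range J) (T \<inter> diag_range J)"
    unfolding ominus_def using ed orth by auto
  ultimately show ?thesis unfolding fset_def r_def mem_Collect_eq
    by (intro exI[of _ \<xi>] exI[of _ \<eta>]) (use x n en in auto)
qed

lemma fc_le_unit: assumes T: "T \<subseteq> l2" and c: "0 \<le> c"
  shows "friedrichs_cos T (diag_range J) \<le> c \<longleftrightarrow>
    (\<forall>\<xi>\<in>ominus T (T \<inter> diag_range J). l2norm \<xi> = 1 \<longrightarrow> l2norm (pr J \<xi>) \<le> c)"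
proof
  assume h: "friedrichs_cos T (diag_range J) \<le> c"
  show "\<forall>\<xi>\<in>ominus T (T \<inter> diag_range J). l2norm \<xi> = 1 \<longrightarrow> l2norm (pr J \<xi>) \<le> c"
  proof (intro ballI impI)
    fix \<xi> assume x: "\<xi> \<in> ominus T (T \<inter> diag_range J)" and n: "l2norm \<xi> = 1"
    show "l2norm (pr J \<xi>) \<le> c"
    proof (cases "l2norm (pr J \<xi>) = 0")
      case True thus ?thesis using c by simp
    next
      case False
      hence "l2norm (pr J \<xi>) \<in> insert 0 (fset T J)" using fset_mem[OF T x n] by simp
      hence "l2norm (pr J \<xi>) \<le> Sup (insert 0 (fset T J))"
        using fset_bdd[OF T] by (rule cSup_upper)
      thus ?thesis using h fc_eq by simp
    qed
  qed
next
  assume h: "\<forall>\<xi>\<in>ominus T (T \<inter> diag_range J). l2norm \<xi> = 1 \<longrightarrow> l2norm (pr J \<xi>) \<le> c"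
  have "Sup (insert 0 (fset T J)) \<le> c"
  proof (rule cSup_least)
    fix r assume "r \<in> insert 0 (fset T J)"
    then consider "r = 0" | "r \<in> fset T J" by auto
    thus "r \<le> c"
    proof cases
      case 2
      then obtain \<xi> where x: "\<xi>\<in>ominus T (T \<inter> diag_range J)" "l2norm \<xi> = 1" "r \<le> l2norm (pr J \<xi>)"
        using fset_le[OF T] by blast
      thus ?thesis using h by force
    qed (use c in simp)
  qed simp
  thus "friedrichs_cos T (diag_range J) \<le> c" using fc_eq by simp
qed

lemma fc_range: assumes T: "T \<subseteq> l2"
  shows "0 \<le> friedrichs_cos T (diag_range J)" "friedrichs_cos T (diag_range J) \<le> 1"
proof -
  show "0 \<le> friedrichs_cos T (diag_range J)" unfolding fc_eq
    using fset_bdd[OF T] by (rule cSup_upper[rotated]) simp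
  show "friedrichs_cos T (diag_range J) \<le> 1" unfolding fc_eq
  proof (rule cSup_least)
    fix r assume "r \<in> insert 0 (fset T J)"
    then consider "r = 0" | "r \<in> fset T J" by auto
    thus "r \<le> 1"
    proof cases
      case 2
      then obtain \<xi> where x: "\<xi>\<in>ominus T (T \<inter> diag_range J)" "l2norm \<xi> = 1" "r \<le> l2norm (pr J \<xi>)"
        using fset_le[OF T] by blast
      have "\<xi> \<in> l2" using x T unfolding ominus_def by auto
      thus ?thesis using pr_le[of \<xi> J] x by simp
    qed simp
  qed simp
qed

definition subsp :: "(nat \<Rightarrow> complex) set \<Rightarrow> bool" where
  "subsp T \<longleftrightarrow> T \<subseteq> l2 \<and> (\<lambda>k. 0) \<in> T
     \<and> (\<forall>x\<in>T. \<forall>y\<in>T. (\<lambda>k. x k + y k) \<in> T)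
     \<and> (\<forall>x\<in>T. \<forall>c::complex. (\<lambda>k. c * x k) \<in> T)"

lemma subsp_diff: "subsp T \<Longrightarrow> x \<in> T \<Longrightarrow> y \<in> T \<Longrightarrow> (\<lambda>k. x k - y k) \<in> T"
proof -
  assume s: "subsp T" and xy: "x \<in> T" "y \<in> T"
  have sc: "\<forall>x\<in>T. \<forall>c::complex. (\<lambda>k. c * x k) \<in> T" and ad: "\<forall>x\<in>T. \<forall>y\<in>T. (\<lambda>k. x k + y k) \<in> T"
    using s unfolding subsp_def by auto
  have m: "(\<lambda>k. (-1) * y k) \<in> T" by (rule bspec[OF sc xy(2), THEN spec])
  have "(\<lambda>k. x k + (\<lambda>k. (-1) * y k) k) \<in> T" by (rule bspec[OF bspec[OF ad xy(1)] m])
  hence "(\<lambda>k. x k + (-1) * y k) \<in> T" by simp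
  thus ?thesis by simp
qed

lemma subsp_add: "subsp T \<Longrightarrow> x \<in> T \<Longrightarrow> y \<in> T \<Longrightarrow> (\<lambda>k. x k + y k) \<in> T"
proof -
  assume s: "subsp T" and xy: "x \<in> T" "y \<in> T"
  have ad: "\<forall>x\<in>T. \<forall>y\<in>T. (\<lambda>k. x k + y k) \<in> T" using s unfolding subsp_def by auto
  show ?thesis by (rule bspec[OF bspec[OF ad xy(1)] xy(2)])
qed

lemma subsp_scale: "subsp T \<Longrightarrow> x \<in> T \<Longrightarrow> (\<lambda>k. c * x k) \<in> T"
proof -
  assume s: "subsp T" and x: "x \<in> T"
  have sc: "\<forall>x\<in>T. \<forall>c::complex. (\<lambda>k. c * x k) \<in> T" using s unfolding subsp_def by auto
  show ?thesis by (rule bspec[OF sc x, THEN spec])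
qed

lemma subsp_l2: "subsp T \<Longrightarrow> x \<in> T \<Longrightarrow> x \<in> l2" unfolding subsp_def by auto
lemma subsp_0: "subsp T \<Longrightarrow> (\<lambda>k. 0) \<in> T" unfolding subsp_def by auto

definition GoodH :: "(nat \<Rightarrow> complex) set \<Rightarrow> real \<Rightarrow> bool" where
  "GoodH T c \<longleftrightarrow> (\<forall>J. \<forall>\<xi>\<in>ominus T (T \<inter> diag_range J). l2norm (pr J \<xi>) \<le> c * l2norm \<xi>)"

lemma unit_hom: assumes T: "subsp T" and c: "0 \<le> c"
  shows "(\<forall>\<xi>\<in>ominus T (T \<inter> diag_range J). l2norm \<xi> = 1 \<longrightarrow> l2norm (pr J \<xi>) \<le> c) \<longleftrightarrow>
         (\<forall>\<xi>\<in>ominus T (T \<inter> diag_range J). l2norm (pr J \<xi>) \<le> c * l2norm \<xi>)"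
proof
  assume h: "\<forall>\<xi>\<in>ominus T (T \<inter> diag_range J). l2norm \<xi> = 1 \<longrightarrow> l2norm (pr J \<xi>) \<le> c"
  show "\<forall>\<xi>\<in>ominus T (T \<inter> diag_range J). l2norm (pr J \<xi>) \<le> c * l2norm \<xi>"
  proof
    fix \<xi> assume x: "\<xi> \<in> ominus T (T \<inter> diag_range J)"
    have xl: "\<xi> \<in> l2" using x T unfolding ominus_def subsp_def by auto
    show "l2norm (pr J \<xi>) \<le> c * l2norm \<xi>"
    proof (cases "l2norm \<xi> = 0")
      case True
      hence "pr J \<xi> = (\<lambda>k. 0)" using l2norm_zero_iff[OF xl] unfolding pr_def by auto
      thus ?thesis using True by (simp add: l2norm_def)
    next
      case False
      define s where "s = l2norm \<xi>"
      have sp: "s > 0" using False l2norm_nonneg[OF xl] unfolding s_def by simp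
      define \<zeta> where "\<zeta> = (\<lambda>k. complex_of_real (1/s) * \<xi> k)"
      have sc: "\<forall>x\<in>T. \<forall>c::complex. (\<lambda>k. c * x k) \<in> T" using T unfolding subsp_def by auto
      have "\<xi> \<in> T" using x unfolding ominus_def by auto
      hence zT: "\<zeta> \<in> T" using bspec[OF sc, THEN spec, of \<xi> "complex_of_real (1/s)"] unfolding \<zeta>_def by simp
      have zo: "\<zeta> \<in> ominus T (T \<inter> diag_range J)"
        unfolding ominus_def
      proof (intro CollectI conjI ballI zT)
        fix w assume w: "w \<in> T \<inter> diag_range J"
        hence "w \<in> l2" using T unfolding subsp_def by auto
        hence "l2inner \<zeta> w = complex_of_real (1/s) * l2inner \<xi> w"
          unfolding \<zeta>_def by (rule inner_scale_left[OF xl])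
        thus "l2inner \<zeta> w = 0" using x w unfolding ominus_def by auto
      qed
      have "l2norm \<zeta> = cmod (complex_of_real (1/s)) * l2norm \<xi>"
        unfolding \<zeta>_def by (rule norm_scale[OF xl])
      hence zn: "l2norm \<zeta> = 1" using sp unfolding s_def by (simp add: norm_divide)
      have "pr J \<zeta> = (\<lambda>k. complex_of_real (1/s) * pr J \<xi> k)" unfolding \<zeta>_def pr_def by auto
      hence "l2norm (pr J \<zeta>) = cmod (complex_of_real (1/s)) * l2norm (pr J \<xi>)"
        using norm_scale[OF l2_pr[OF xl]] by metis
      hence "l2norm (pr J \<zeta>) = (1/s) * l2norm (pr J \<xi>)" using sp by (simp add: norm_divide)
      hence "(1/s) * l2norm (pr J \<xi>) \<le> c" using h zo zn by auto
      thus ?thesis using sp unfolding s_def by (simp add: field_simps)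
    qed
  qed
next
  assume "\<forall>\<xi>\<in>ominus T (T \<inter> diag_range J). l2norm (pr J \<xi>) \<le> c * l2norm \<xi>"
  thus "\<forall>\<xi>\<in>ominus T (T \<inter> diag_range J). l2norm \<xi> = 1 \<longrightarrow> l2norm (pr J \<xi>) \<le> c" by auto
qed

lemma cosD_bdd: "T \<subseteq> l2 \<Longrightarrow> bdd_above (range (\<lambda>J. friedrichs_cos T (diag_range J)))"
  using fc_range by (intro bdd_aboveI[where M=1]) auto

lemma cosD_le_iff: assumes T: "subsp T" and c: "0 \<le> c"
  shows "cos_D T \<le> c \<longleftrightarrow> GoodH T c"
proof -
  have Tl: "T \<subseteq> l2" using T unfolding subsp_def by auto
  have "cos_D T \<le> c \<longleftrightarrow> (\<forall>J. friedrichs_cos T (diag_range J) \<le> c)"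
    unfolding cos_D_def using cosD_bdd[OF Tl] by (subst cSUP_le_iff) auto
  also have "\<dots> \<longleftrightarrow> GoodH T c"
    unfolding GoodH_def fc_le_unit[OF Tl c] unit_hom[OF T c] ..
  finally show ?thesis .
qed

lemma cosD_range: assumes T: "T \<subseteq> l2" shows "0 \<le> cos_D T" "cos_D T \<le> 1"
proof -
  show "0 \<le> cos_D T" unfolding cos_D_def
    using fc_range(1)[OF T, of "{}"] cosD_bdd[OF T] by (intro cSUP_upper2[where x="{}"]) auto
  show "cos_D T \<le> 1" unfolding cos_D_def
    using fc_range(2)[OF T] by (intro cSUP_least) auto
qed


lemma subseq_coords:
  fixes f :: "nat \<Rightarrow> nat \<Rightarrow> complex"
  assumes B: "\<forall>k i. cmod (f k i) \<le> B"
  shows "\<exists>r. strict_mono r \<and> (\<forall>i<m. convergent (\<lambda>k. f (r k) i))"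
proof (induction m)
  case 0 show ?case by (rule exI[of _ id]) (simp add: strict_mono_def)
next
  case (Suc m)
  then obtain r where r: "strict_mono r" "\<forall>i<m. convergent (\<lambda>k. f (r k) i)" by blast
  have "bounded (range (\<lambda>k. f (r k) m))" using B by (intro boundedI[where B=B]) auto
  then obtain l s where s: "strict_mono s" "((\<lambda>k. f (r k) m) \<circ> s) \<longlonglongrightarrow> l"
    using bounded_imp_convergent_subsequence by blast
  show ?case
  proof (rule exI[of _ "r \<circ> s"], intro conjI allI impI)
    show "strict_mono (r \<circ> s)" using r(1) s(1) by (rule strict_mono_o)
    fix i assume "i < Suc m"
    then consider "i < m" | "i = m" by linarith
    thus "convergent (\<lambda>k. f ((r \<circ> s) k) i)"
    proof cases
      case 1
      hence "convergent ((\<lambda>k. f (r k) i) \<circ> s)" using r(2) s(1) convergent_subseq_convergent by blast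
      thus ?thesis by (simp add: o_def)
    next
      case 2 thus ?thesis using s(2) by (auto simp: convergent_def o_def)
    qed
  qed
qed

lemma Hn_l2: "x \<in> Hn n \<Longrightarrow> x \<in> l2" unfolding Hn_def by auto

lemma l2norm_fin: "\<forall>i\<ge>n. v i = 0 \<Longrightarrow> l2norm v = sqrt (\<Sum>i<n. (cmod (v i))\<^sup>2)"
  unfolding l2norm_def by (subst suminf_finite[where N="{..<n}"]) auto

lemma compact_Hn:
  fixes x :: "nat \<Rightarrow> nat \<Rightarrow> complex"
  assumes x: "\<forall>k. x k \<in> Hn n" and B: "\<forall>k. l2norm (x k) \<le> B"
  shows "\<exists>r z. strict_mono r \<and> z \<in> Hn n \<and> (\<lambda>k. l2norm (\<lambda>i. x (r k) i - z i)) \<longlonglongrightarrow> 0"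
proof -
  have "\<forall>k i. cmod (x k i) \<le> B"
  proof (intro allI)
    fix k i
    have "x k \<in> l2" using x Hn_l2 by auto
    thus "cmod (x k i) \<le> B" using coord_le[of "x k" i] B by (meson order_trans)
  qed
  then obtain r where r: "strict_mono r" "\<forall>i<n. convergent (\<lambda>k. x (r k) i)"
    using subseq_coords[of x B n] by blast
  define z where "z = (\<lambda>i. if i < n then lim (\<lambda>k. x (r k) i) else 0)"
  have zH: "z \<in> Hn n" unfolding Hn_def z_def using l2_fin[of n] by auto
  have conv: "(\<lambda>k. x (r k) i) \<longlonglongrightarrow> z i" if "i < n" for i
    using r(2) that unfolding z_def by (simp add: convergent_LIMSEQ_iff)
  have eq: "l2norm (\<lambda>i. x (r k) i - z i) = sqrt (\<Sum>i<n. (cmod (x (r k) i - z i))\<^sup>2)" for k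
    using x unfolding Hn_def z_def by (intro l2norm_fin) auto
  have t1: "(\<lambda>k. (cmod (x (r k) i - z i))\<^sup>2) \<longlonglongrightarrow> 0" if "i \<in> {..<n}" for i
  proof -
    have "(\<lambda>k. x (r k) i - z i) \<longlonglongrightarrow> z i - z i"
      using that by (intro tendsto_diff conv tendsto_const) simp
    hence "(\<lambda>k. x (r k) i - z i) \<longlonglongrightarrow> 0" by simp
    hence "(\<lambda>k. cmod (x (r k) i - z i)) \<longlonglongrightarrow> 0" by (rule tendsto_norm_zero)
    hence "(\<lambda>k. (cmod (x (r k) i - z i))\<^sup>2) \<longlonglongrightarrow> 0\<^sup>2" by (rule tendsto_power)
    thus ?thesis by simp
  qed
  have "(\<lambda>k. \<Sum>i<n. (cmod (x (r k) i - z i))\<^sup>2) \<longlonglongrightarrow> (\<Sum>i<n. (0::real))"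
    by (rule tendsto_sum) (rule t1)
  hence "(\<lambda>k. sqrt (\<Sum>i<n. (cmod (x (r k) i - z i))\<^sup>2)) \<longlonglongrightarrow> sqrt 0"
    by (intro tendsto_real_sqrt) simp
  hence "(\<lambda>k. l2norm (\<lambda>i. x (r k) i - z i)) \<longlonglongrightarrow> 0" unfolding eq by simp
  thus ?thesis using r(1) zH by blast
qed

lemma le_eps: "(\<And>e. e > 0 \<Longrightarrow> (a::real) \<le> b + e) \<Longrightarrow> a \<le> b"
  by (rule field_le_epsilon) auto

lemma proj_exists:
  assumes V: "subsp V" "V \<subseteq> Hn n"
    and cl: "\<And>(s::nat\<Rightarrow>nat\<Rightarrow>complex) z. (\<forall>k. s k \<in> V) \<Longrightarrow> z \<in> Hn n \<Longrightarrow>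
              (\<lambda>k. l2norm (\<lambda>i. s k i - z i)) \<longlonglongrightarrow> 0 \<Longrightarrow> z \<in> V"
    and x: "x \<in> l2"
  shows "\<exists>v\<in>V. \<forall>w\<in>V. l2inner (\<lambda>k. x k - v k) w = 0"
proof -
  have Vl: "V \<subseteq> l2" and V0: "(\<lambda>k. 0) \<in> V"
    and Vadd: "\<forall>x\<in>V. \<forall>y\<in>V. (\<lambda>k. x k + y k) \<in> V"
    and Vsc: "\<forall>x\<in>V. \<forall>c::complex. (\<lambda>k. c * x k) \<in> V" using V(1) unfolding subsp_def by auto
  define D where "D = (\<lambda>v. l2norm (\<lambda>k. x k - v k)) ` V"
  define d where "d = Inf D"
  have Dne: "D \<noteq> {}" unfolding D_def using V0 by auto
  have Dbdd: "bdd_below D" unfolding D_def using Vl x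
    by (intro bdd_belowI[where m=0]) (auto intro!: l2norm_nonneg l2_diff)
  have low: "d \<le> l2norm (\<lambda>k. x k - w k)" if "w \<in> V" for w
    unfolding d_def using that Dbdd unfolding D_def by (intro cInf_lower) auto
  have "\<exists>v\<in>V. l2norm (\<lambda>k. x k - v k) < d + inverse (real (Suc k))" for k
  proof -
    have "Inf D < d + inverse (real (Suc k))" unfolding d_def by simp
    then obtain y where "y \<in> D" "y < d + inverse (real (Suc k))" using cInf_less_iff[OF Dne Dbdd] by blast
    thus ?thesis unfolding D_def by auto
  qed
  then obtain s where s: "\<And>k. s k \<in> V" "\<And>k. l2norm (\<lambda>i. x i - s k i) < d + inverse (real (Suc k))"
    by metis
  have sl: "s k \<in> l2" for k using s(1) Vl by auto
  have sb: "l2norm (s k) \<le> l2norm x + d + 1" for k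
  proof -
    have "l2norm (s k) \<le> l2norm x + l2norm (\<lambda>i. s k i - x i)" by (rule norm_diff_ge[OF sl x])
    also have "l2norm (\<lambda>i. s k i - x i) = l2norm (\<lambda>i. x i - s k i)" by (rule norm_sym)
    also have "\<dots> < d + inverse (real (Suc k))" by (rule s(2))
    also have "inverse (real (Suc k)) \<le> 1" by (simp add: field_simps)
    finally show ?thesis by simp
  qed
  have sH: "\<forall>k. s k \<in> Hn n" using s(1) V(2) by auto
  obtain r v where r: "strict_mono r" "v \<in> Hn n" "(\<lambda>k. l2norm (\<lambda>i. s (r k) i - v i)) \<longlonglongrightarrow> 0"
    using compact_Hn[OF sH, of "l2norm x + d + 1"] sb by blast
  have vV: "v \<in> V" using cl[of "\<lambda>k. s (r k)" v] s(1) r by auto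
  have vl: "v \<in> l2" using vV Vl by auto
  have vmin: "l2norm (\<lambda>k. x k - v k) \<le> d"
  proof (rule le_eps)
    fix e :: real assume e: "e > 0"
    have "\<forall>\<^sub>F k in sequentially. l2norm (\<lambda>i. s (r k) i - v i) < e/2"
      using e by (intro order_tendstoD(2)[OF r(3)]) simp
    moreover have "\<forall>\<^sub>F k in sequentially. inverse (real (Suc k)) < e/2"
      using e by (intro order_tendstoD(2)[OF LIMSEQ_inverse_real_of_nat]) simp
    ultimately have "\<forall>\<^sub>F k in sequentially. l2norm (\<lambda>i. s (r k) i - v i) < e/2 \<and> inverse (real (Suc k)) < e/2"
      by (rule eventually_conj)
    then obtain N where "\<forall>k\<ge>N. l2norm (\<lambda>i. s (r k) i - v i) < e/2 \<and> inverse (real (Suc k)) < e/2"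
      unfolding eventually_sequentially by blast
    then obtain k where k1: "l2norm (\<lambda>i. s (r k) i - v i) < e/2" and k2: "inverse (real (Suc k)) < e/2"
      by blast
    have "k \<le> r k" using r(1) by (rule seq_suble)
    hence k3: "inverse (real (Suc (r k))) \<le> inverse (real (Suc k))" by (simp add: le_imp_inverse_le)
    have "l2norm (\<lambda>i. x i - v i) \<le> l2norm (\<lambda>i. x i - s (r k) i) + l2norm (\<lambda>i. s (r k) i - v i)"
      by (rule norm_triangle3[OF x sl vl])
    also have "\<dots> \<le> d + e" using s(2)[of "r k"] k1 k2 k3 by linarith
    finally show "l2norm (\<lambda>i. x i - v i) \<le> d + e" .
  qed
  have minimal: "l2norm (\<lambda>k. x k - v k) \<le> l2norm (\<lambda>k. x k - w k)" if "w \<in> V" for w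
    using vmin low[OF that] by linarith
  define u where "u = (\<lambda>k. x k - v k)"
  have ul: "u \<in> l2" unfolding u_def using x vl by (rule l2_diff)
  have orth: "l2inner u w = 0" if w: "w \<in> V" for w
  proof -
    have wl: "w \<in> l2" using w Vl by auto
    define a where "a = l2inner u w"
    define N where "N = (l2norm w)\<^sup>2"
    have N0: "0 \<le> N" unfolding N_def by simp
    define sr where "sr = 1 / (N + 1)"
    have sr0: "sr > 0" unfolding sr_def using N0 by simp
    define t where "t = complex_of_real sr * a"
    have twl: "(\<lambda>k. t * w k) \<in> l2" using wl by (rule l2_scale)
    have "(\<lambda>k. t * w k) \<in> V" using V(1) w by (rule subsp_scale)
    hence "(\<lambda>k. v k + t * w k) \<in> V" using V(1) vV by (intro subsp_add)
    hence "l2norm u \<le> l2norm (\<lambda>k. x k - (v k + t * w k))" using minimal unfolding u_def by blast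
    also have "(\<lambda>k. x k - (v k + t * w k)) = (\<lambda>k. u k - t * w k)" unfolding u_def by (auto simp: algebra_simps)
    finally have m: "(l2norm u)\<^sup>2 \<le> (l2norm (\<lambda>k. u k - t * w k))\<^sup>2"
      using l2norm_nonneg[OF ul] by (simp add: power_mono)
    have "(l2norm (\<lambda>k. u k - t * w k))\<^sup>2 = (l2norm u)\<^sup>2 - 2 * Re (l2inner u (\<lambda>k. t * w k)) + (l2norm (\<lambda>k. t * w k))\<^sup>2"
      by (rule norm_diff_sq[OF ul twl])
    also have "l2inner u (\<lambda>k. t * w k) = cnj t * a" unfolding a_def by (rule inner_scale_right[OF wl ul])
    also have "Re (cnj t * a) = sr * (cmod a)\<^sup>2"
    proof -
      have "cnj t * a = complex_of_real sr * (a * cnj a)" unfolding t_def by (simp add: mult_ac)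
      also have "a * cnj a = complex_of_real ((cmod a)\<^sup>2)" by (rule complex_norm_square[symmetric])
      finally show ?thesis by simp
    qed
    also have "l2norm (\<lambda>k. t * w k) = cmod t * l2norm w" by (rule norm_scale[OF wl])
    also have "(cmod t * l2norm w)\<^sup>2 = sr\<^sup>2 * (cmod a)\<^sup>2 * N"
      unfolding t_def N_def using sr0 by (simp add: norm_mult power_mult_distrib)
    finally have "2 * (sr * (cmod a)\<^sup>2) \<le> sr\<^sup>2 * (cmod a)\<^sup>2 * N" using m by simp
    hence "2 * (cmod a)\<^sup>2 \<le> sr * (cmod a)\<^sup>2 * N" using sr0 by (simp add: power2_eq_square algebra_simps)
    also have "sr * (cmod a)\<^sup>2 * N = (cmod a)\<^sup>2 * (N / (N + 1))" unfolding sr_def by simp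
    also have "\<dots> \<le> (cmod a)\<^sup>2 * 1" using N0 by (intro mult_left_mono) auto
    finally have "(cmod a)\<^sup>2 \<le> 0" by simp
    thus ?thesis unfolding a_def by simp
  qed
  show ?thesis using vV orth unfolding u_def by blast
qed


lemma cs_subsp: "closed_subspace S \<Longrightarrow> subsp S"
  unfolding closed_subspace_def subsp_def by auto

lemma cs_closed:
  fixes s :: "nat \<Rightarrow> nat \<Rightarrow> complex"
  assumes "closed_subspace S" "\<forall>k. s k \<in> S" "z \<in> l2" "(\<lambda>k. l2norm (\<lambda>i. s k i - z i)) \<longlonglongrightarrow> 0"
  shows "z \<in> S"
proof -
  have "\<forall>(x::nat \<Rightarrow> nat \<Rightarrow> complex) z. (\<forall>n. x n \<in> S) \<and> z \<in> l2
           \<and> (\<lambda>n. l2norm (\<lambda>k. x n k - z k)) \<longlonglongrightarrow> 0 \<longrightarrow> z \<in> S"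
    using assms(1) unfolding closed_subspace_def by (elim conjE)
  from this[rule_format, of s z] show ?thesis using assms(2-4) by simp
qed

lemma diag_inter: "diag_range A \<inter> diag_range B = diag_range (A \<inter> B)"
  unfolding diag_range_def by auto

lemma subsp_diag: "subsp (diag_range K)"
  unfolding subsp_def diag_range_def using l2_zero l2_add l2_scale by auto

lemma subsp_inter: "subsp A \<Longrightarrow> subsp B \<Longrightarrow> subsp (A \<inter> B)"
  unfolding subsp_def by auto

lemma piece_closed:
  fixes s :: "nat \<Rightarrow> nat \<Rightarrow> complex"
  assumes S: "closed_subspace S" and s: "\<forall>k. s k \<in> S \<inter> diag_range K" and z: "z \<in> Hn n"
    and lim: "(\<lambda>k. l2norm (\<lambda>i. s k i - z i)) \<longlonglongrightarrow> 0"
  shows "z \<in> S \<inter> diag_range K"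
proof -
  have zl: "z \<in> l2" using z by (rule Hn_l2)
  have zS: "z \<in> S" using cs_closed[OF S _ zl lim] s by auto
  have "z i = 0" if i: "i \<notin> K" for i
  proof -
    have "cmod (z i) \<le> l2norm (\<lambda>i. s k i - z i)" for k
    proof -
      have sk: "s k \<in> l2" "s k i = 0" using s i unfolding diag_range_def by auto
      have "cmod ((\<lambda>i. s k i - z i) i) \<le> l2norm (\<lambda>i. s k i - z i)"
        by (rule coord_le[OF l2_diff[OF sk(1) zl]])
      thus ?thesis using sk(2) by simp
    qed
    hence "cmod (z i) \<le> 0" by (intro LIMSEQ_le_const[OF lim]) auto
    thus ?thesis by simp
  qed
  thus ?thesis using zS zl unfolding diag_range_def by auto
qed

lemma tail_small: assumes x: "x \<in> l2" and e: "e > 0"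
  shows "\<exists>N. \<forall>n\<ge>N. l2norm (pr (-{..<n}) x) < e"
proof -
  define f where "f = (\<lambda>k. (cmod (x k))\<^sup>2)"
  have sf: "summable f" using x unfolding f_def l2_def by auto
  obtain N where N: "\<forall>n\<ge>N. norm (\<Sum>i. f (i + n)) < e\<^sup>2" using suminf_exist_split[of "e\<^sup>2" f] e sf by auto
  have "l2norm (pr (-{..<n}) x) < e" if n: "n \<ge> N" for n
  proof -
    define g where "g = (\<lambda>k. (cmod (pr (-{..<n}) x k))\<^sup>2)"
    have pl: "pr (-{..<n}) x \<in> l2" using x by (rule l2_pr)
    have sg: "summable g" using pl unfolding g_def l2_def by auto
    have "(l2norm (pr (-{..<n}) x))\<^sup>2 = suminf g" unfolding g_def by (rule nsq[OF pl])
    also have "\<dots> = (\<Sum>i. g (i + n)) + (\<Sum>i<n. g i)" by (rule suminf_split_initial_segment[OF sg])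
    also have "(\<Sum>i<n. g i) = 0" unfolding g_def pr_def by simp
    also have "(\<lambda>i. g (i + n)) = (\<lambda>i. f (i + n))" unfolding g_def f_def pr_def by auto
    finally have "(l2norm (pr (-{..<n}) x))\<^sup>2 = (\<Sum>i. f (i + n))" by simp
    also have "\<dots> \<le> norm (\<Sum>i. f (i + n))" by simp
    also have "\<dots> < e\<^sup>2" using N n by auto
    finally have "(l2norm (pr (-{..<n}) x))\<^sup>2 < e\<^sup>2" .
    thus ?thesis using e by (rule power2_less_imp_less[OF _ less_imp_le])
  qed
  thus ?thesis by blast
qed

lemma ominus_scale: assumes T: "subsp T" and W: "W \<subseteq> l2" and x: "\<xi> \<in> ominus T W"
  shows "(\<lambda>k. c * \<xi> k) \<in> ominus T W"
proof -
  have xT: "\<xi> \<in> T" using x unfolding ominus_def by auto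
  have xl: "\<xi> \<in> l2" using subsp_l2[OF T xT] .
  show ?thesis unfolding ominus_def
  proof (intro CollectI conjI ballI)
    show "(\<lambda>k. c * \<xi> k) \<in> T" using T xT by (rule subsp_scale)
    fix w assume w: "w \<in> W"
    have "l2inner (\<lambda>k. c * \<xi> k) w = c * l2inner \<xi> w" using W w by (intro inner_scale_left[OF xl]) auto
    thus "l2inner (\<lambda>k. c * \<xi> k) w = 0" using x w unfolding ominus_def by auto
  qed
qed

lemma ev2: assumes f: "f \<longlonglongrightarrow> (0::real)" and e: "e > 0" and r: "strict_mono r"
  shows "\<exists>k. f k < e \<and> inverse (real (Suc (r k))) < e"
proof -
  have "\<forall>\<^sub>F k in sequentially. f k < e" using e by (intro order_tendstoD(2)[OF f])
  moreover have "\<forall>\<^sub>F k in sequentially. inverse (real (Suc k)) < e"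
    using e by (intro order_tendstoD(2)[OF LIMSEQ_inverse_real_of_nat])
  ultimately have "\<forall>\<^sub>F k in sequentially. f k < e \<and> inverse (real (Suc k)) < e"
    by (rule eventually_conj)
  then obtain N where N: "\<forall>k\<ge>N. f k < e \<and> inverse (real (Suc k)) < e"
    unfolding eventually_sequentially by blast
  have "N \<le> r N" using r by (rule seq_suble)
  hence "inverse (real (Suc (r N))) \<le> inverse (real (Suc N))" by (simp add: le_imp_inverse_le)
  moreover have "f N < e" "inverse (real (Suc N)) < e" using N by auto
  ultimately have "f N < e \<and> inverse (real (Suc (r N))) < e" by linarith
  thus ?thesis by (rule exI)
qed


lemma T_subsp: "closed_subspace S \<Longrightarrow> subsp (S \<inter> Hn n)"
  unfolding Hn_diag by (intro subsp_inter cs_subsp subsp_diag)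

lemma sqrt_bound: assumes "0 \<le> x" "0 \<le> y" "x\<^sup>2 \<le> q * y\<^sup>2" "0 \<le> q"
  shows "x \<le> sqrt q * y"
proof -
  have "x = sqrt (x\<^sup>2)" using assms(1) by simp
  also have "\<dots> \<le> sqrt (q * y\<^sup>2)" using assms(3) by (rule real_sqrt_le_mono)
  also have "\<dots> = sqrt q * y" using assms(2) by (simp add: real_sqrt_mult)
  finally show ?thesis .
qed

lemma perK:
  assumes S: "closed_subspace S"
  shows "\<exists>a>0. \<forall>\<xi>\<in>ominus (S \<inter> Hn n) ((S \<inter> Hn n) \<inter> diag_range K). a * l2norm \<xi> \<le> l2norm (pr (-K) \<xi>)"
proof (rule ccontr)
  define T where "T = S \<inter> Hn n"
  define Oset where "Oset = ominus T (T \<inter> diag_range K)"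
  have Tsub: "subsp T" unfolding T_def using S by (rule T_subsp)
  have Wl2: "T \<inter> diag_range K \<subseteq> l2" using Tsub unfolding subsp_def by auto
  assume "\<not> ?thesis"
  hence neg: "\<forall>a>0. \<exists>\<xi>\<in>Oset. l2norm (pr (-K) \<xi>) < a * l2norm \<xi>" unfolding Oset_def T_def by (auto simp: not_le)
  have "\<exists>\<zeta>\<in>Oset. l2norm \<zeta> = 1 \<and> l2norm (pr (-K) \<zeta>) < inverse (real (Suc k))" for k
  proof -
    obtain \<xi> where x: "\<xi> \<in> Oset" "l2norm (pr (-K) \<xi>) < inverse (real (Suc k)) * l2norm \<xi>"
      using neg by (meson inverse_positive_iff_positive of_nat_0_less_iff zero_less_Suc)
    have xT: "\<xi> \<in> T" using x(1) unfolding Oset_def ominus_def by auto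
    have xl: "\<xi> \<in> l2" using subsp_l2[OF Tsub xT] .
    have "0 \<le> l2norm (pr (-K) \<xi>)" using l2norm_nonneg[OF l2_pr[OF xl]] .
    hence sp: "l2norm \<xi> > 0" using x(2) l2norm_nonneg[OF xl]
      by (metis less_eq_real_def mult_zero_right not_less)
    define s where "s = l2norm \<xi>"
    define \<zeta> where "\<zeta> = (\<lambda>i. complex_of_real (1/s) * \<xi> i)"
    have zO: "\<zeta> \<in> Oset" unfolding \<zeta>_def Oset_def using Tsub Wl2 x(1)[unfolded Oset_def] by (rule ominus_scale)
    have "l2norm \<zeta> = cmod (complex_of_real (1/s)) * l2norm \<xi>" unfolding \<zeta>_def by (rule norm_scale[OF xl])
    hence zn: "l2norm \<zeta> = 1" using sp unfolding s_def by (simp add: norm_divide)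
    have "pr (-K) \<zeta> = (\<lambda>i. complex_of_real (1/s) * pr (-K) \<xi> i)" unfolding \<zeta>_def pr_def by auto
    hence "l2norm (pr (-K) \<zeta>) = cmod (complex_of_real (1/s)) * l2norm (pr (-K) \<xi>)"
      using norm_scale[OF l2_pr[OF xl]] by metis
    hence "l2norm (pr (-K) \<zeta>) = l2norm (pr (-K) \<xi>) / s" using sp unfolding s_def by (simp add: norm_divide)
    also have "\<dots> < inverse (real (Suc k))" using x(2) sp unfolding s_def by (simp add: field_simps)
    finally show ?thesis using zO zn by blast
  qed
  then obtain \<zeta> where z: "\<And>k. \<zeta> k \<in> Oset" "\<And>k. l2norm (\<zeta> k) = 1"
    "\<And>k. l2norm (pr (-K) (\<zeta> k)) < inverse (real (Suc k))" by metis
  have zT: "\<zeta> k \<in> T" for k using z(1) unfolding Oset_def ominus_def by auto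
  have zl: "\<zeta> k \<in> l2" for k using subsp_l2[OF Tsub zT] .
  have zH: "\<forall>k. \<zeta> k \<in> Hn n" using zT unfolding T_def by auto
  obtain r z0 where r: "strict_mono r" "z0 \<in> Hn n" "(\<lambda>k. l2norm (\<lambda>i. \<zeta> (r k) i - z0 i)) \<longlonglongrightarrow> 0"
    using compact_Hn[OF zH, of 1] z(2) by auto
  define d where "d = (\<lambda>k. l2norm (\<lambda>i. \<zeta> (r k) i - z0 i))"
  have dlim: "d \<longlonglongrightarrow> 0" unfolding d_def by (rule r(3))
  have z0l: "z0 \<in> l2" using r(2) by (rule Hn_l2)
  have "z0 \<in> S \<inter> diag_range {..<n}"
    using zT r(2) r(3) unfolding T_def Hn_diag by (intro piece_closed[OF S, of "\<lambda>k. \<zeta> (r k)" _ z0 n]) (auto simp: Hn_diag)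
  hence z0T: "z0 \<in> T" unfolding T_def Hn_diag by simp
  have dsym: "l2norm (\<lambda>i. z0 i - \<zeta> (r k) i) = d k" for k unfolding d_def by (rule norm_sym)
  have n1: "l2norm z0 \<le> 1"
  proof (rule le_eps)
    fix e :: real assume e: "e > 0"
    obtain k where k: "d k < e" using ev2[OF dlim e r(1)] by blast
    have "l2norm z0 \<le> l2norm (\<zeta> (r k)) + l2norm (\<lambda>i. z0 i - \<zeta> (r k) i)" by (rule norm_diff_ge[OF z0l zl])
    thus "l2norm z0 \<le> 1 + e" using k z(2) dsym by simp
  qed
  have n2: "1 \<le> l2norm z0"
  proof (rule le_eps)
    fix e :: real assume e: "e > 0"
    obtain k where k: "d k < e" using ev2[OF dlim e r(1)] by blast
    have "l2norm (\<zeta> (r k)) \<le> l2norm z0 + l2norm (\<lambda>i. \<zeta> (r k) i - z0 i)" by (rule norm_diff_ge[OF zl z0l])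
    thus "1 \<le> l2norm z0 + e" using k z(2) unfolding d_def by simp
  qed
  have orth: "l2inner z0 w = 0" if w: "w \<in> T \<inter> diag_range K" for w
  proof -
    have wl: "w \<in> l2" using w Wl2 by auto
    have "cmod (l2inner z0 w) \<le> 0"
    proof (rule le_eps)
      fix e :: real assume e: "e > 0"
      have e': "e / (l2norm w + 1) > 0" using e l2norm_nonneg[OF wl] by simp
      obtain k where k: "d k < e / (l2norm w + 1)" using ev2[OF dlim e' r(1)] by blast
      have "l2inner (\<lambda>i. z0 i - \<zeta> (r k) i) w = l2inner z0 w - l2inner (\<zeta> (r k)) w"
        by (rule inner_diff_left[OF z0l zl wl])
      also have "l2inner (\<zeta> (r k)) w = 0" using z(1)[of "r k"] w unfolding Oset_def ominus_def by auto
      finally have "cmod (l2inner z0 w) = cmod (l2inner (\<lambda>i. z0 i - \<zeta> (r k) i) w)" by simp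
      also have "\<dots> \<le> l2norm (\<lambda>i. z0 i - \<zeta> (r k) i) * l2norm w"
        by (rule cauchy_schwarz[OF l2_diff[OF z0l zl] wl])
      also have "\<dots> = d k * l2norm w" using dsym by simp
      also have "\<dots> \<le> e / (l2norm w + 1) * l2norm w"
        using k l2norm_nonneg[OF wl] by (intro mult_right_mono) auto
      also have "\<dots> \<le> e" using e l2norm_nonneg[OF wl] by (simp add: field_simps)
      finally show "cmod (l2inner z0 w) \<le> 0 + e" by simp
    qed
    thus ?thesis by simp
  qed
  have p0: "l2norm (pr (-K) z0) \<le> 0"
  proof (rule le_eps)
    fix e :: real assume e: "e > 0"
    have e2: "e / 2 > 0" using e by simp
    obtain k where k: "d k < e/2" "inverse (real (Suc (r k))) < e/2" using ev2[OF dlim e2 r(1)] by blast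
    have "l2norm (pr (-K) z0) \<le> l2norm (pr (-K) (\<zeta> (r k))) + l2norm (\<lambda>i. pr (-K) z0 i - pr (-K) (\<zeta> (r k)) i)"
      by (rule norm_diff_ge[OF l2_pr[OF z0l] l2_pr[OF zl]])
    also have "(\<lambda>i. pr (-K) z0 i - pr (-K) (\<zeta> (r k)) i) = pr (-K) (\<lambda>i. z0 i - \<zeta> (r k) i)"
      by (rule pr_diff[symmetric])
    also have "l2norm (pr (-K) (\<lambda>i. z0 i - \<zeta> (r k) i)) \<le> d k"
      using pr_le[OF l2_diff[OF z0l zl[of "r k"]], of "-K"] dsym[of k] by simp
    finally show "l2norm (pr (-K) z0) \<le> 0 + e" using z(3)[of "r k"] k by simp
  qed
  hence "l2norm (pr (-K) z0) = 0" using l2norm_nonneg[OF l2_pr[OF z0l], of "-K"] by simp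
  hence pz: "\<forall>i. pr (-K) z0 i = 0" using l2norm_zero_iff[OF l2_pr[OF z0l]] by simp
  have "z0 i = 0" if "i \<notin> K" for i using spec[OF pz, of i] that by (simp add: pr_def)
  hence "z0 \<in> diag_range K" using z0l unfolding diag_range_def by auto
  hence "l2inner z0 z0 = 0" using orth z0T by auto
  hence "l2norm z0 = 0" using inner_self[OF z0l] by simp
  thus False using n2 by simp
qed


lemma fd: assumes S: "closed_subspace S" shows "cos_D (S \<inter> Hn n) < 1"
proof -
  define T where "T = S \<inter> Hn n"
  have Tsub: "subsp T" unfolding T_def using S by (rule T_subsp)
  have "\<forall>K. \<exists>a>0. \<forall>\<xi>\<in>ominus T (T \<inter> diag_range K). a * l2norm \<xi> \<le> l2norm (pr (-K) \<xi>)"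
    using perK[OF S] unfolding T_def by blast
  then obtain af where af: "\<And>K. af K > 0"
    "\<And>K \<xi>. \<xi> \<in> ominus T (T \<inter> diag_range K) \<Longrightarrow> af K * l2norm \<xi> \<le> l2norm (pr (-K) \<xi>)"
    by metis
  define A where "A = af ` Pow {..<n}"
  have finA: "finite A" "A \<noteq> {}" unfolding A_def by auto
  define a0 where "a0 = min 1 (Min A)"
  have "0 < Min A" using finA af unfolding A_def by simp
  hence a0p: "a0 > 0" unfolding a0_def by simp
  have a01: "a0 \<le> 1" unfolding a0_def by simp
  have a0le: "a0 \<le> af K" if "K \<subseteq> {..<n}" for K
  proof -
    have "af K \<in> A" unfolding A_def using that by auto
    hence "Min A \<le> af K" using finA by simp
    thus ?thesis unfolding a0_def by simp
  qed
  define c where "c = sqrt (1 - a0\<^sup>2)"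
  have "a0\<^sup>2 \<le> 1\<^sup>2" using a0p a01 by (intro power_mono) auto
  hence q0: "0 \<le> 1 - a0\<^sup>2" by simp
  have c1: "c < 1" unfolding c_def using a0p by simp
  have c0: "0 \<le> c" unfolding c_def using q0 by simp
  have "GoodH T c" unfolding GoodH_def
  proof (intro allI ballI)
    fix J \<xi> assume x: "\<xi> \<in> ominus T (T \<inter> diag_range J)"
    define K where "K = J \<inter> {..<n}"
    have eqW: "T \<inter> diag_range J = T \<inter> diag_range K"
      unfolding T_def K_def Hn_def diag_range_def by auto
    have xK: "\<xi> \<in> ominus T (T \<inter> diag_range K)" using x eqW by simp
    have xT: "\<xi> \<in> T" using x unfolding ominus_def by auto
    have xl: "\<xi> \<in> l2" using subsp_l2[OF Tsub xT] .
    have xH: "\<forall>k\<ge>n. \<xi> k = 0" using xT unfolding T_def Hn_def by auto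
    have prJK: "pr J \<xi> = pr K \<xi>" unfolding pr_def K_def using xH by (auto simp: not_less)
    have "a0 * l2norm \<xi> \<le> af K * l2norm \<xi>"
      using a0le[of K] l2norm_nonneg[OF xl] unfolding K_def by (intro mult_right_mono) auto
    also have "\<dots> \<le> l2norm (pr (-K) \<xi>)" by (rule af(2)[OF xK])
    finally have h1: "a0 * l2norm \<xi> \<le> l2norm (pr (-K) \<xi>)" .
    have "(a0 * l2norm \<xi>)\<^sup>2 \<le> (l2norm (pr (-K) \<xi>))\<^sup>2"
      using h1 a0p l2norm_nonneg[OF xl] by (intro power_mono) auto
    hence "(l2norm (pr K \<xi>))\<^sup>2 \<le> (1 - a0\<^sup>2) * (l2norm \<xi>)\<^sup>2"
      using pr_split[OF xl, of K] by (simp add: power_mult_distrib algebra_simps)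
    hence "l2norm (pr K \<xi>) \<le> c * l2norm \<xi>" unfolding c_def
      using l2norm_nonneg[OF xl] l2norm_nonneg[OF l2_pr[OF xl], of K] q0 by (intro sqrt_bound) auto
    thus "l2norm (pr J \<xi>) \<le> c * l2norm \<xi>" using prJK by simp
  qed
  hence "cos_D T \<le> c" using cosD_le_iff[OF Tsub c0] by simp
  thus ?thesis using c1 unfolding T_def by simp
qed

lemma KD_mono: assumes "0 \<le> a" "a \<le> b" "b < 1"
  shows "1 / sqrt (1 - a\<^sup>2) \<le> 1 / sqrt (1 - b\<^sup>2)"
proof -
  have "a\<^sup>2 \<le> b\<^sup>2" using assms by (intro power_mono) auto
  moreover have "b\<^sup>2 < 1" using assms by (simp add: power2_less_1_iff abs_less_iff) 
  ultimately have "0 < sqrt (1 - b\<^sup>2)" "sqrt (1 - b\<^sup>2) \<le> sqrt (1 - a\<^sup>2)" by auto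
  thus ?thesis by (intro divide_left_mono) auto
qed

lemma KD_bound: assumes "0 \<le> a" "a < 1" "M > 0" "1 / sqrt (1 - a\<^sup>2) \<le> M"
  shows "a \<le> sqrt (1 - 1 / M\<^sup>2)"
proof -
  have b: "a\<^sup>2 < 1" using assms by (simp add: power2_less_1_iff abs_less_iff)
  hence sp: "0 < sqrt (1 - a\<^sup>2)" by simp
  have "1 \<le> M * sqrt (1 - a\<^sup>2)" using assms(4) sp by (simp add: field_simps)
  hence "1 / M \<le> sqrt (1 - a\<^sup>2)" using assms(3) by (simp add: field_simps)
  hence "(1 / M)\<^sup>2 \<le> (sqrt (1 - a\<^sup>2))\<^sup>2" using assms(3) by (intro power_mono) auto
  hence "1 / M\<^sup>2 \<le> 1 - a\<^sup>2" using b by (simp add: power_divide)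
  hence "a\<^sup>2 \<le> 1 - 1 / M\<^sup>2" by simp
  thus ?thesis by (rule real_le_rsqrt)
qed


lemma proj_piece:
  assumes S: "closed_subspace S" and K: "K \<subseteq> {..<n}" and x: "x \<in> l2"
  shows "\<exists>v\<in>S \<inter> diag_range K. \<forall>w\<in>S \<inter> diag_range K. l2norm (\<lambda>k. 0) = 0 \<and> l2inner (\<lambda>k. x k - v k) w = 0"
proof -
  have V: "subsp (S \<inter> diag_range K)" by (intro subsp_inter cs_subsp[OF S] subsp_diag)
  have VH: "S \<inter> diag_range K \<subseteq> Hn n" using K unfolding Hn_def diag_range_def by auto
  have "\<exists>v\<in>S \<inter> diag_range K. \<forall>w\<in>S \<inter> diag_range K. l2inner (\<lambda>k. x k - v k) w = 0"
    by (rule proj_exists[OF V VH _ x]) (rule piece_closed[OF S], auto)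
  thus ?thesis by (simp add: l2norm_def)
qed

lemma dirA_density:
  assumes S: "closed_subspace S" and B: "cos_D S < 1"
  shows "\<forall>x\<in>S. \<forall>\<epsilon>>0. \<exists>n\<ge>1. \<exists>y\<in>S \<inter> Hn n. l2norm (\<lambda>k. x k - y k) < \<epsilon>"
proof (intro ballI allI impI)
  fix x and \<epsilon> :: real assume xS: "x \<in> S" and ep: "\<epsilon> > 0"
  have Ssub: "subsp S" using S by (rule cs_subsp)
  have Sl: "S \<subseteq> l2" using Ssub unfolding subsp_def by auto
  define c where "c = cos_D S"
  have c0: "0 \<le> c" unfolding c_def using cosD_range(1)[OF Sl] .
  have c1: "c < 1" unfolding c_def using B .
  have G: "GoodH S c" using cosD_le_iff[OF Ssub c0] unfolding c_def by simp
  define s0 where "s0 = 1 - c\<^sup>2"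
  have "c\<^sup>2 < 1" using c0 c1 by (simp add: power2_less_1_iff abs_less_iff)
  hence s0p: "s0 > 0" unfolding s0_def by simp
  have xl: "x \<in> l2" using xS Sl by auto
  have "\<epsilon> * sqrt s0 > 0" using ep s0p by simp
  then obtain N where N: "\<forall>n\<ge>N. l2norm (pr (-{..<n}) x) < \<epsilon> * sqrt s0" using tail_small[OF xl] by blast
  define n where "n = max N 1"
  define J where "J = {..<n}"
  obtain v where v: "v \<in> S \<inter> diag_range J" and vo: "\<forall>w\<in>S \<inter> diag_range J. l2inner (\<lambda>k. x k - v k) w = 0"
    using proj_piece[OF S _ xl, of J n] unfolding J_def by auto
  have vl: "v \<in> l2" using v Sl by auto
  define \<xi> where "\<xi> = (\<lambda>k. x k - v k)"
  have xiS: "\<xi> \<in> S" unfolding \<xi>_def using Ssub xS by (rule subsp_diff) (use v in auto)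
  have xil: "\<xi> \<in> l2" using xiS Sl by auto
  have xio: "\<xi> \<in> ominus S (S \<inter> diag_range J)" unfolding ominus_def \<xi>_def using xiS vo \<xi>_def by auto
  have g: "l2norm (pr J \<xi>) \<le> c * l2norm \<xi>" using G xio unfolding GoodH_def by blast
  have prx: "pr (-J) \<xi> = pr (-J) x" unfolding pr_def \<xi>_def using v unfolding diag_range_def by auto
  have "(l2norm (pr J \<xi>))\<^sup>2 \<le> (c * l2norm \<xi>)\<^sup>2"
    using g l2norm_nonneg[OF l2_pr[OF xil], of J] by (intro power_mono) auto
  hence "s0 * (l2norm \<xi>)\<^sup>2 \<le> (l2norm (pr (-J) x))\<^sup>2"
    using pr_split[OF xil, of J] prx unfolding s0_def by (simp add: power_mult_distrib algebra_simps)
  also have "(l2norm (pr (-J) x))\<^sup>2 < (\<epsilon> * sqrt s0)\<^sup>2"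
    using N l2norm_nonneg[OF l2_pr[OF xl], of "-J"] unfolding J_def n_def
    by (intro power_strict_mono) auto
  also have "\<dots> = s0 * \<epsilon>\<^sup>2" using s0p by (simp add: power_mult_distrib)
  finally have "(l2norm \<xi>)\<^sup>2 < \<epsilon>\<^sup>2" using s0p by simp
  hence "l2norm \<xi> < \<epsilon>" using ep by (rule power2_less_imp_less[OF _ less_imp_le])
  moreover have "v \<in> S \<inter> Hn n" using v unfolding J_def Hn_diag by simp
  moreover have "n \<ge> 1" unfolding n_def by simp
  ultimately show "\<exists>n\<ge>1. \<exists>y\<in>S \<inter> Hn n. l2norm (\<lambda>k. x k - y k) < \<epsilon>" unfolding \<xi>_def by blast
qed

lemma dirA_bound:
  assumes S: "closed_subspace S" and B: "cos_D S < 1"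
  shows "\<exists>M>0. \<forall>n\<ge>1. K_D (S \<inter> Hn n) \<le> M"
proof -
  have Ssub: "subsp S" using S by (rule cs_subsp)
  have Sl: "S \<subseteq> l2" using Ssub unfolding subsp_def by auto
  define c where "c = cos_D S"
  have c0: "0 \<le> c" unfolding c_def using cosD_range(1)[OF Sl] .
  have c1: "c < 1" unfolding c_def using B .
  have G: "GoodH S c" using cosD_le_iff[OF Ssub c0] unfolding c_def by simp
  have "c\<^sup>2 < 1" using c0 c1 by (simp add: power2_less_1_iff abs_less_iff)
  hence Mp: "1 / sqrt (1 - c\<^sup>2) > 0" by simp
  have "K_D (S \<inter> Hn n) \<le> 1 / sqrt (1 - c\<^sup>2)" for n
  proof -
    define T where "T = S \<inter> Hn n"
    have Tsub: "subsp T" unfolding T_def using S by (rule T_subsp)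
    have Tl: "T \<subseteq> l2" using Tsub unfolding subsp_def by auto
    have "GoodH T c" unfolding GoodH_def
    proof (intro allI ballI)
      fix J \<xi> assume x: "\<xi> \<in> ominus T (T \<inter> diag_range J)"
      define K where "K = J \<inter> {..<n}"
      have eqW: "T \<inter> diag_range J = S \<inter> diag_range K"
        unfolding T_def K_def Hn_def diag_range_def by auto
      have xT: "\<xi> \<in> T" using x unfolding ominus_def by auto
      have xS: "\<xi> \<in> ominus S (S \<inter> diag_range K)"
        using x xT eqW unfolding ominus_def T_def by auto
      have xH: "\<forall>k\<ge>n. \<xi> k = 0" using xT unfolding T_def Hn_def by auto
      have prJK: "pr J \<xi> = pr K \<xi>" unfolding pr_def K_def using xH by (auto simp: not_less)
      have "l2norm (pr K \<xi>) \<le> c * l2norm \<xi>" using G xS unfolding GoodH_def by blast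
      thus "l2norm (pr J \<xi>) \<le> c * l2norm \<xi>" using prJK by simp
    qed
    hence "cos_D T \<le> c" using cosD_le_iff[OF Tsub c0] by simp
    hence "1 / sqrt (1 - (cos_D T)\<^sup>2) \<le> 1 / sqrt (1 - c\<^sup>2)"
      using cosD_range(1)[OF Tl] c1 by (intro KD_mono) auto
    thus ?thesis unfolding K_D_def T_def .
  qed
  thus ?thesis using Mp by blast
qed


lemma dirB:
  assumes S: "closed_subspace S"
    and D: "\<forall>x\<in>S. \<forall>\<epsilon>>0. \<exists>n\<ge>1. \<exists>y\<in>S \<inter> Hn n. l2norm (\<lambda>k. x k - y k) < \<epsilon>"
    and Mp: "M > 0" and MB: "\<forall>n\<ge>1. K_D (S \<inter> Hn n) \<le> M"
  shows "cos_D S < 1"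
proof -
  have Ssub: "subsp S" using S by (rule cs_subsp)
  have Sl: "S \<subseteq> l2" using Ssub unfolding subsp_def by auto
  define c0 where "c0 = sqrt (1 - 1 / M\<^sup>2)"
  have "1 / M\<^sup>2 > 0" using Mp by simp
  hence c01: "c0 < 1" unfolding c0_def by simp
  have "(1::real) / M\<^sup>2 \<le> 1 \<or> True" by simp
  have GT: "GoodH (S \<inter> Hn n) c0" if n: "n \<ge> 1" for n
  proof -
    have Tsub: "subsp (S \<inter> Hn n)" using S by (rule T_subsp)
    have Tl: "S \<inter> Hn n \<subseteq> l2" using Tsub unfolding subsp_def by auto
    have "cos_D (S \<inter> Hn n) \<le> c0" unfolding c0_def
      using cosD_range(1)[OF Tl] fd[OF S, of n] Mp MB n unfolding K_D_def by (intro KD_bound) auto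
    moreover have c0n: "0 \<le> c0" using cosD_range(1)[OF Tl] calculation by linarith
    ultimately show ?thesis using cosD_le_iff[OF Tsub c0n] by simp
  qed
  have c0n: "0 \<le> c0"
  proof -
    have Tl: "S \<inter> Hn 1 \<subseteq> l2" using Sl by auto
    have "cos_D (S \<inter> Hn 1) \<le> c0" unfolding c0_def
      using cosD_range(1)[OF Tl] fd[OF S, of 1] Mp MB unfolding K_D_def by (intro KD_bound) auto
    thus ?thesis using cosD_range(1)[OF Tl] by linarith
  qed
  have "GoodH S c0" unfolding GoodH_def
  proof (intro allI ballI)
    fix J \<xi> assume x: "\<xi> \<in> ominus S (S \<inter> diag_range J)"
    have xS: "\<xi> \<in> S" using x unfolding ominus_def by auto
    have xl: "\<xi> \<in> l2" using xS Sl by auto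
    show "l2norm (pr J \<xi>) \<le> c0 * l2norm \<xi>"
    proof (rule le_eps)
      fix e :: real assume e: "e > 0"
      define \<delta> where "\<delta> = e / 4"
      have dp: "\<delta> > 0" unfolding \<delta>_def using e by simp
      obtain n y where n: "n \<ge> 1" and y: "y \<in> S \<inter> Hn n" and xy: "l2norm (\<lambda>k. \<xi> k - y k) < \<delta>"
        using D xS dp by blast
      have yl: "y \<in> l2" using y Sl by auto
      define K where "K = J \<inter> {..<n}"
      obtain v where v: "v \<in> S \<inter> diag_range K" and vo: "\<forall>w\<in>S \<inter> diag_range K. l2inner (\<lambda>k. y k - v k) w = 0"
        using proj_piece[OF S _ yl, of K n] unfolding K_def by auto
      have vl: "v \<in> l2" using v Sl by auto
      define T where "T = S \<inter> Hn n"
      have Tsub: "subsp T" unfolding T_def using S by (rule T_subsp)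
      have vT: "v \<in> T" using v unfolding T_def K_def Hn_def diag_range_def by auto
      have yT: "y \<in> T" using y unfolding T_def .
      define y' where "y' = (\<lambda>k. y k - v k)"
      have y'T: "y' \<in> T" unfolding y'_def using Tsub yT vT by (rule subsp_diff)
      have y'l: "y' \<in> l2" using subsp_l2[OF Tsub y'T] .
      have eqW: "T \<inter> diag_range J = S \<inter> diag_range K"
        unfolding T_def K_def Hn_def diag_range_def by auto
      have y'o: "y' \<in> ominus T (T \<inter> diag_range J)" unfolding ominus_def eqW
        using y'T vo unfolding y'_def by auto
      have gy: "l2norm (pr J y') \<le> c0 * l2norm y'" using GT[OF n] y'o unfolding GoodH_def T_def by blast
      have vJ: "v \<in> S \<inter> diag_range J" using v unfolding K_def diag_range_def by auto
      have xv: "l2inner \<xi> v = 0" using x vJ unfolding ominus_def by auto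
      have yv: "l2inner y' v = 0" using vo v unfolding y'_def by auto
      have "l2inner (\<lambda>k. y k - \<xi> k) v = l2inner y v - l2inner \<xi> v" by (rule inner_diff_left[OF yl xl vl])
      also have "l2inner y v = l2inner y' v + l2inner v v"
        using inner_diff_left[OF yl vl vl] unfolding y'_def[symmetric] by simp
      finally have "l2inner (\<lambda>k. y k - \<xi> k) v = of_real ((l2norm v)\<^sup>2)" using xv yv inner_self[OF vl] by simp
      hence "cmod (l2inner (\<lambda>k. y k - \<xi> k) v) = cmod (complex_of_real ((l2norm v)\<^sup>2))" by (simp only:)
      hence "(l2norm v)\<^sup>2 = cmod (l2inner (\<lambda>k. y k - \<xi> k) v)" by (simp only: norm_of_real abs_power2)
      also have "\<dots> \<le> l2norm (\<lambda>k. y k - \<xi> k) * l2norm v" by (rule cauchy_schwarz[OF l2_diff[OF yl xl] vl])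
      finally have vv: "l2norm v * l2norm v \<le> l2norm (\<lambda>k. y k - \<xi> k) * l2norm v" by (simp add: power2_eq_square)
      have vle: "l2norm v \<le> l2norm (\<lambda>k. \<xi> k - y k)"
      proof (cases "l2norm v = 0")
        case True thus ?thesis using l2norm_nonneg[OF l2_diff[OF xl yl]] by simp
      next
        case False
        hence "l2norm v > 0" using l2norm_nonneg[OF vl] by simp
        hence "l2norm v \<le> l2norm (\<lambda>k. y k - \<xi> k)" using vv by simp
        thus ?thesis using norm_sym[of y \<xi>] by simp
      qed
      have "l2norm (\<lambda>k. \<xi> k - y' k) \<le> l2norm (\<lambda>k. \<xi> k - y k) + l2norm (\<lambda>k. y k - y' k)"
        by (rule norm_triangle3[OF xl yl y'l])
      also have "(\<lambda>k. y k - y' k) = v" unfolding y'_def by auto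
      finally have dxy: "l2norm (\<lambda>k. \<xi> k - y' k) < 2 * \<delta>" using vle xy by simp
      define d where "d = l2norm (\<lambda>k. \<xi> k - y' k)"
      have d0: "0 \<le> d" unfolding d_def using l2norm_nonneg[OF l2_diff[OF xl y'l]] .
      have "l2norm (pr J \<xi>) \<le> l2norm (pr J y') + l2norm (\<lambda>k. pr J \<xi> k - pr J y' k)"
        by (rule norm_diff_ge[OF l2_pr[OF xl] l2_pr[OF y'l]])
      also have "(\<lambda>k. pr J \<xi> k - pr J y' k) = pr J (\<lambda>k. \<xi> k - y' k)" by (rule pr_diff[symmetric])
      also have "l2norm (pr J (\<lambda>k. \<xi> k - y' k)) \<le> d" unfolding d_def by (rule pr_le[OF l2_diff[OF xl y'l]])
      finally have h1: "l2norm (pr J \<xi>) \<le> c0 * l2norm y' + d" using gy by simp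
      have "l2norm y' \<le> l2norm \<xi> + l2norm (\<lambda>k. y' k - \<xi> k)" by (rule norm_diff_ge[OF y'l xl])
      hence "l2norm y' \<le> l2norm \<xi> + d" unfolding d_def using norm_sym[of y' \<xi>] by simp
      hence "c0 * l2norm y' \<le> c0 * (l2norm \<xi> + d)" using c0n by (rule mult_left_mono)
      hence "l2norm (pr J \<xi>) \<le> c0 * l2norm \<xi> + c0 * d + d" using h1 by (simp add: algebra_simps)
      also have "c0 * d \<le> 1 * d" using c01 d0 by (intro mult_right_mono) auto
      finally show "l2norm (pr J \<xi>) \<le> c0 * l2norm \<xi> + e" using dxy unfolding d_def \<delta>_def by simp
    qed
  qed
  hence "cos_D S \<le> c0" using cosD_le_iff[OF Ssub c0n] by simp
  thus ?thesis using c01 by simp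
qed

theorem proposition4p13:
  assumes "closed_subspace S"
  shows "B_compatible S \<longleftrightarrow>
    ((\<forall>x\<in>S. \<forall>\<epsilon>>0. \<exists>n\<ge>1. \<exists>y\<in>S \<inter> Hn n. l2norm (\<lambda>k. x k - y k) < \<epsilon>)
     \<and> (\<exists>M>0. \<forall>n\<ge>1. K_D (S \<inter> Hn n) \<le> M))"
proof
  assume "B_compatible S"
  hence B: "cos_D S < 1" unfolding B_compatible_def .
  show "(\<forall>x\<in>S. \<forall>\<epsilon>>0. \<exists>n\<ge>1. \<exists>y\<in>S \<inter> Hn n. l2norm (\<lambda>k. x k - y k) < \<epsilon>)
     \<and> (\<exists>M>0. \<forall>n\<ge>1. K_D (S \<inter> Hn n) \<le> M)"
    using dirA_density[OF assms B] dirA_bound[OF assms B] by blast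
next
  assume h: "(\<forall>x\<in>S. \<forall>\<epsilon>>0. \<exists>n\<ge>1. \<exists>y\<in>S \<inter> Hn n. l2norm (\<lambda>k. x k - y k) < \<epsilon>)
     \<and> (\<exists>M>0. \<forall>n\<ge>1. K_D (S \<inter> Hn n) \<le> M)"
  then obtain M where "M > 0" "\<forall>n\<ge>1. K_D (S \<inter> Hn n) \<le> M" by blast
  thus "B_compatible S" unfolding B_compatible_def using dirB[OF assms] h by blast
qed

end
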